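(* Let $V_1,V_2$ be closed subspaces of a Hilbert space $\mathcal H$, neither of which contains the other, and let $\Sigma$ be the operator on $V_1\oplus V_2$ given by $\Sigma(v_1,v_2)=(P_{V_1}(v_1+v_2),P_{V_2}(v_1+v_2))$. Then $\mathrm{Spec}(\Sigma)\subseteq[1-\cos\angle(V_1,V_2),\,1+\cos\angle(V_1,V_2)]\cup\{0,2\}$, and both points $1\pm\cos\angle(V_1,V_2)$ belong to $\mathrm{Spec}(\Sigma)$.
   Context: $V_1\oplus V_2$ is the external orthogonal direct sum; $P_V$ is the orthogonal projection onto $V$. For closed subspaces $V_1,V_2$ neither of which contains the other, the (Friederichs) angle $\angle(V_1,V_2)\in[0,\pi/2]$ is defined by $\cos\angle(V_1,V_2)=\sup\{|\langle v_1,v_2\rangle| : v_i\in V_i,\ \|v_i\|=1,\ v_i\perp V_1\cap V_2\}$. *)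

theory Defs
  imports "HOL-Analysis.Analysis"
begin

definition orth_proj :: "'a::real_inner set \<Rightarrow> 'a \<Rightarrow> 'a" where
  "orth_proj V x = (THE v. v \<in> V \<and> (\<forall>w\<in>V. inner (x - v) w = 0))"

text \<open>External orthogonal direct sum V1 (+) V2, realised as pairs in 'a \<times> 'a;
  the product norm on 'a \<times> 'a is sqrt(norm a^2 + norm b^2), i.e. the orthogonal sum norm.\<close>
definition dsum :: "'a set \<Rightarrow> 'a set \<Rightarrow> ('a \<times> 'a) set" where
  "dsum V1 V2 = V1 \<times> V2"

definition Sigma_op :: "'a::real_inner set \<Rightarrow> 'a set \<Rightarrow> 'a \<times> 'a \<Rightarrow> 'a \<times> 'a" where
  "Sigma_op V1 V2 = (\<lambda>(v1, v2). (orth_proj V1 (v1 + v2), orth_proj V2 (v1 + v2)))"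

definition op_spectrum :: "'b::real_normed_vector set \<Rightarrow> ('b \<Rightarrow> 'b) \<Rightarrow> real set" where
  "op_spectrum D T = {l. \<not> (bij_betw (\<lambda>x. T x - l *\<^sub>R x) D D \<and>
       (\<exists>C. \<forall>x\<in>D. norm x \<le> C * norm (T x - l *\<^sub>R x)))}"

definition friedrichs_angle :: "'a::real_inner set \<Rightarrow> 'a set \<Rightarrow> real" where
  "friedrichs_angle V1 V2 = arccos (Sup {\<bar>inner v1 v2\<bar> | v1 v2.
      v1 \<in> V1 \<and> v2 \<in> V2 \<and> norm v1 = 1 \<and> norm v2 = 1 \<and>
      (\<forall>w\<in>V1 \<inter> V2. inner v1 w = 0) \<and> (\<forall>w\<in>V1 \<inter> V2. inner v2 w = 0)})"

end

theory Submission
  imports Defs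
begin


lemma parallelogram_aux:
  fixes a b :: "'b::real_inner"
  shows "(norm (a - b))^2 = 2*(norm a)^2 + 2*(norm b)^2 - (norm (a + b))^2"
  by (simp add: power2_norm_eq_inner inner_add_left inner_add_right inner_diff_left inner_diff_right inner_commute algebra_simps)

lemma proj_exists:
  fixes S :: "'b::{real_inner,complete_space} set"
  assumes S: "subspace S" "closed S"
  shows "\<exists>p\<in>S. \<forall>w\<in>S. inner (x - p) w = 0"
proof -
  define N where "N = (\<lambda>s. norm (x - s)) ` S"
  define d where "d = Inf N"
  have N0: "N \<noteq> {}" using subspace_0[OF S(1)] N_def by auto
  have Nb: "bdd_below N" unfolding N_def by (rule bdd_belowI[of _ 0]) auto
  have dle: "d \<le> norm (x - s)" if "s \<in> S" for s
    unfolding d_def using Nb that N_def by (auto intro: cInf_lower)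
  have d0: "0 \<le> d" unfolding d_def using N0 N_def by (auto intro: cInf_greatest)
  have "\<forall>n. \<exists>s\<in>S. norm (x - s) < d + 1/Suc n"
  proof
    fix n
    have "Inf N < d + 1/Suc n" unfolding d_def by simp
    then obtain y where "y \<in> N" "y < d + 1/Suc n" using cInf_less_iff[OF N0 Nb] by auto
    then show "\<exists>s\<in>S. norm (x - s) < d + 1/Suc n" unfolding N_def by auto
  qed
  then obtain s where sS: "\<And>n. s n \<in> S" and sd: "\<And>n. norm (x - s n) < d + 1/Suc n" by metis
  have par: "(norm (s m - s n))^2 \<le> 2*(d + 1/Suc m)^2 + 2*(d + 1/Suc n)^2 - 4*d^2" for m n
  proof -
    let ?a = "x - s n" let ?b = "x - s m"
    have mid: "(1/2) *\<^sub>R (s m + s n) \<in> S" using S(1) sS by (simp add: subspace_add subspace_scale)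
    then have "d \<le> norm (x - (1/2) *\<^sub>R (s m + s n))" by (rule dle)
    moreover have "x - (1/2) *\<^sub>R (s m + s n) = (1/2) *\<^sub>R (?a + ?b)" by (simp add: algebra_simps flip: scaleR_add_left)
    ultimately have "2*d \<le> norm (?a + ?b)" by simp
    then have h1: "4*d^2 \<le> (norm (?a + ?b))^2" using d0
      by (metis mult_2 power2_le_imp_le zero_le_mult_iff power_mono zero_le_numeral power2_eq_square four_x_squared) 
    have "?a - ?b = s m - s n" by simp
    then have id: "(norm (s m - s n))^2 = 2*(norm ?a)^2 + 2*(norm ?b)^2 - (norm (?a + ?b))^2"
      using parallelogram_aux[of ?a ?b] by simp
    have h2: "(norm ?a)^2 \<le> (d + 1/Suc n)^2" using sd[of n] by (intro power_mono) auto
    have h3: "(norm ?b)^2 \<le> (d + 1/Suc m)^2" using sd[of m] by (intro power_mono) auto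
    show ?thesis using id h1 h2 h3 by linarith
  qed
  have "Cauchy s"
  proof (rule metric_CauchyI)
    fix e :: real assume e: "e > 0"
    define \<eta> where "\<eta> = min 1 (e^2 / (8*d + 5))"
    have \<eta>0: "\<eta> > 0" using e d0 by (simp add: \<eta>_def)
    obtain M where M: "1 / Suc M < \<eta>" using \<eta>0
      by (metis nat_approx_posE)
    show "\<exists>M. \<forall>m\<ge>M. \<forall>n\<ge>M. dist (s m) (s n) < e"
    proof (intro exI allI impI)
      fix m n assume mn: "m \<ge> M" "n \<ge> M"
      have em: "1/Suc m \<le> 1/Suc M" "1/Suc n \<le> 1/Suc M" using mn by (auto simp: frac_le)
      define a where "a = 1/Suc m" define b where "b = 1/Suc n"
      have ab: "0 \<le> a" "a < \<eta>" "0 \<le> b" "b < \<eta>" using em M unfolding a_def b_def by auto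
      have "2*(d + a)^2 + 2*(d + b)^2 - 4*d^2 = 4*d*a + 2*a*a + 4*d*b + 2*b*b"
        by (simp add: power2_eq_square algebra_simps)
      also have "\<dots> \<le> 4*d*\<eta> + 2*\<eta> + 4*d*\<eta> + 2*\<eta>"
      proof -
        have e1: "\<eta> \<le> 1" by (simp add: \<eta>_def)
        have "a*a \<le> a*1" using ab e1 by (intro mult_left_mono) auto
        moreover have "b*b \<le> b*1" using ab e1 by (intro mult_left_mono) auto
        moreover have "d*a \<le> d*\<eta>" "d*b \<le> d*\<eta>" using ab d0 by (auto intro: mult_left_mono)
        ultimately show ?thesis using ab by (simp add: algebra_simps)
      qed
      also have "\<dots> = (8*d+4)*\<eta>" by (simp add: algebra_simps)
      also have "\<dots> < e^2"
      proof -
        have "(8*d+4)*\<eta> < (8*d+5)*\<eta>" using \<eta>0 by simp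
        also have "\<dots> \<le> (8*d+5)*(e^2/(8*d+5))" using d0 unfolding \<eta>_def by (intro mult_left_mono) auto
        also have "\<dots> = e^2" using d0 by simp
        finally show ?thesis .
      qed
      finally have "(norm (s m - s n))^2 < e^2" using par[of m n] a_def b_def by simp
      then show "dist (s m) (s n) < e" using e by (simp add: dist_norm power_less_imp_less_base)
    qed
  qed
  then obtain p where p: "s \<longlonglongrightarrow> p" using Cauchy_convergent convergent_def by blast
  have pS: "p \<in> S" using closed_sequentially[OF S(2)] sS p by blast
  have "(\<lambda>n. norm (x - s n)) \<longlonglongrightarrow> norm (x - p)" by (intro tendsto_intros p)
  moreover have "(\<lambda>n. d + 1/Suc n) \<longlonglongrightarrow> d + 0"
  proof -
    have "(\<lambda>n. 1/real (Suc n)) \<longlonglongrightarrow> 0" using LIMSEQ_inverse_real_of_nat by (simp add: inverse_eq_divide)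
    then show ?thesis by (intro tendsto_intros)
  qed
  ultimately have pd: "norm (x - p) \<le> d" using sd by (intro LIMSEQ_le[of "\<lambda>n. norm (x - s n)" _ "\<lambda>n. d + 1 / Suc n"]) (auto intro: less_imp_le)
  show ?thesis
  proof (intro bexI[OF _ pS] ballI)
    fix w assume wS: "w \<in> S"
    define a where "a = inner (x - p) w"
    have key: "2*t*a \<le> t^2 * (norm w)^2" for t :: real
    proof -
      have "p + t *\<^sub>R w \<in> S" using S(1) pS wS by (simp add: subspace_add subspace_scale)
      then have "norm (x - p) \<le> norm (x - (p + t *\<^sub>R w))" using dle pd by force
      moreover have "x - (p + t *\<^sub>R w) = (x - p) - t *\<^sub>R w" by (simp add: algebra_simps)
      ultimately have le: "(norm (x - p))^2 \<le> (norm ((x - p) - t *\<^sub>R w))^2"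
        by (metis norm_ge_zero power_mono)
      have ex: "(norm ((x - p) - t *\<^sub>R w))^2 = (norm (x-p))^2 - 2*t*a + t^2*(norm w)^2"
        unfolding a_def by (simp only: power2_norm_eq_inner) (simp add: inner_diff_left inner_diff_right inner_commute power2_eq_square algebra_simps)
      show ?thesis using le ex by linarith
    qed
    show "inner (x - p) w = 0"
    proof (cases "w = 0")
      case True then show ?thesis by simp
    next
      case False
      define b where "b = (norm w)^2"
      have b0: "b > 0" using False b_def by simp
      have "2*(a/b)*a \<le> (a/b)^2 * b" using key[of "a/b"] b_def by simp
      then have "2*a^2/b \<le> a^2/b" using b0 by (simp add: power2_eq_square field_simps)
      then have "a^2 \<le> 0" using b0 by (simp add: divide_le_cancel)
      then show ?thesis unfolding a_def[symmetric] by simp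
    qed
  qed
qed



lemma proj_unique:
  fixes S :: "'b::real_inner set"
  assumes "subspace S" "p \<in> S" "q \<in> S" "\<forall>w\<in>S. inner (x - p) w = 0" "\<forall>w\<in>S. inner (x - q) w = 0"
  shows "p = q"
proof -
  have d: "p - q \<in> S" using assms by (simp add: subspace_diff)
  have "inner (x - p) (p - q) = 0" "inner (x - q) (p - q) = 0" using assms d by auto
  then have "inner (p - q) (p - q) = 0" by (simp add: inner_diff_left inner_diff_right)
  then show ?thesis by simp
qed

lemma orth_proj:
  fixes S :: "'b::{real_inner,complete_space} set"
  assumes "subspace S" "closed S"
  shows "orth_proj S x \<in> S" "\<forall>w\<in>S. inner (x - orth_proj S x) w = 0"
proof -
  have "\<exists>!v. v \<in> S \<and> (\<forall>w\<in>S. inner (x - v) w = 0)"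
    using proj_exists[OF assms, of x] proj_unique[OF assms(1)] by blast
  then have "orth_proj S x \<in> S \<and> (\<forall>w\<in>S. inner (x - orth_proj S x) w = 0)"
    unfolding orth_proj_def by (rule theI')
  then show "orth_proj S x \<in> S" "\<forall>w\<in>S. inner (x - orth_proj S x) w = 0" by auto
qed

lemma orth_proj_eq:
  fixes S :: "'b::{real_inner,complete_space} set"
  assumes "subspace S" "closed S" "v \<in> S" "\<forall>w\<in>S. inner (x - v) w = 0"
  shows "orth_proj S x = v"
  using proj_unique[OF assms(1) orth_proj(1)[OF assms(1,2)] assms(3) orth_proj(2)[OF assms(1,2)] assms(4)] .

lemma orth_proj_id:
  fixes S :: "'b::{real_inner,complete_space} set"
  assumes "subspace S" "closed S" "v \<in> S"
  shows "orth_proj S v = v"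
  using assms by (intro orth_proj_eq) auto

lemma orth_proj_perp:
  fixes S :: "'b::{real_inner,complete_space} set"
  assumes "subspace S" "closed S" "\<forall>w\<in>S. inner v w = 0"
  shows "orth_proj S v = 0"
  using assms by (intro orth_proj_eq) (auto simp: subspace_0)

lemma orth_proj_add:
  fixes S :: "'b::{real_inner,complete_space} set"
  assumes "subspace S" "closed S"
  shows "orth_proj S (x + y) = orth_proj S x + orth_proj S y"
proof (rule orth_proj_eq[OF assms])
  show "orth_proj S x + orth_proj S y \<in> S" using orth_proj[OF assms] assms(1) by (simp add: subspace_add)
  show "\<forall>w\<in>S. inner (x + y - (orth_proj S x + orth_proj S y)) w = 0"
  proof
    fix w assume "w \<in> S"
    then have "inner (x - orth_proj S x) w = 0" "inner (y - orth_proj S y) w = 0" using orth_proj[OF assms] by auto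
    then show "inner (x + y - (orth_proj S x + orth_proj S y)) w = 0"
      by (simp add: inner_diff_left inner_add_left)
  qed
qed

lemma orth_proj_scale:
  fixes S :: "'b::{real_inner,complete_space} set"
  assumes "subspace S" "closed S"
  shows "orth_proj S (r *\<^sub>R x) = r *\<^sub>R orth_proj S x"
proof (rule orth_proj_eq[OF assms])
  show "r *\<^sub>R orth_proj S x \<in> S" using orth_proj[OF assms] assms(1) by (simp add: subspace_scale)
  show "\<forall>w\<in>S. inner (r *\<^sub>R x - r *\<^sub>R orth_proj S x) w = 0"
  proof
    fix w assume "w \<in> S"
    then have "inner (x - orth_proj S x) w = 0" using orth_proj[OF assms] by auto
    then show "inner (r *\<^sub>R x - r *\<^sub>R orth_proj S x) w = 0"
      by (simp add: inner_diff_left)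
  qed
qed

lemma orth_proj_diff:
  fixes S :: "'b::{real_inner,complete_space} set"
  assumes "subspace S" "closed S"
  shows "orth_proj S (x - y) = orth_proj S x - orth_proj S y"
  using orth_proj_add[OF assms, of "x - y" y] by simp

lemma orth_proj_inner_S:
  fixes S :: "'b::{real_inner,complete_space} set"
  assumes "subspace S" "closed S" "y \<in> S"
  shows "inner (orth_proj S x) y = inner x y"
proof -
  have "inner (x - orth_proj S x) y = 0" using orth_proj[OF assms(1,2)] assms(3) by auto
  then show ?thesis by (simp add: inner_diff_left)
qed

lemma orth_proj_sym:
  fixes S :: "'b::{real_inner,complete_space} set"
  assumes "subspace S" "closed S"
  shows "inner (orth_proj S x) y = inner x (orth_proj S y)"
proof -
  have "inner (orth_proj S x) y = inner y (orth_proj S x)" by (simp add: inner_commute)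
  also have "\<dots> = inner (orth_proj S y) (orth_proj S x)"
    using orth_proj_inner_S[OF assms orth_proj(1)[OF assms]] by simp
  also have "\<dots> = inner x (orth_proj S y)"
    using orth_proj_inner_S[OF assms orth_proj(1)[OF assms]] by (simp add: inner_commute)
  finally show ?thesis .
qed

lemma orth_proj_sq:
  fixes S :: "'b::{real_inner,complete_space} set"
  assumes "subspace S" "closed S"
  shows "(norm (orth_proj S x))^2 = inner (orth_proj S x) x"
  using orth_proj_inner_S[OF assms orth_proj(1)[OF assms], of x x]
  by (simp add: power2_norm_eq_inner inner_commute)

lemma orth_proj_norm_le:
  fixes S :: "'b::{real_inner,complete_space} set"
  assumes "subspace S" "closed S"
  shows "norm (orth_proj S x) \<le> norm x"
proof -
  let ?p = "orth_proj S x"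
  have "(norm ?p)^2 = inner ?p x" by (rule orth_proj_sq[OF assms])
  also have "\<dots> \<le> norm ?p * norm x" by (rule real_inner_class.Cauchy_Schwarz_ineq2[THEN order_trans[OF abs_ge_self]])
  finally have "norm ?p * norm ?p \<le> norm ?p * norm x" by (simp add: power2_eq_square)
  then show ?thesis by (cases "norm ?p = 0") (auto simp: mult_le_cancel_left)
qed

lemma orth_proj_bounded_linear:
  fixes S :: "'b::{real_inner,complete_space} set"
  assumes "subspace S" "closed S"
  shows "bounded_linear (orth_proj S)"
  by (rule bounded_linear_intro[where K=1]) (simp_all add: orth_proj_add[OF assms] orth_proj_scale[OF assms] orth_proj_norm_le[OF assms])

definition fset :: "'a::real_inner set \<Rightarrow> 'a set \<Rightarrow> real set" where
  "fset V1 V2 = {\<bar>inner v1 v2\<bar> | v1 v2.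
      v1 \<in> V1 \<and> v2 \<in> V2 \<and> norm v1 = 1 \<and> norm v2 = 1 \<and>
      (\<forall>w\<in>V1 \<inter> V2. inner v1 w = 0) \<and> (\<forall>w\<in>V1 \<inter> V2. inner v2 w = 0)}"

lemma fangle: "friedrichs_angle V1 V2 = arccos (Sup (fset V1 V2))"
  unfolding friedrichs_angle_def fset_def ..

lemma fset_sub: "fset B A \<subseteq> fset A B"
proof
  fix x assume "x \<in> fset B A"
  then obtain v1 v2 where h: "x = \<bar>inner v1 v2\<bar>" "v1 \<in> B" "v2 \<in> A" "norm v1 = 1" "norm v2 = 1"
    "\<forall>w\<in>B \<inter> A. inner v1 w = 0" "\<forall>w\<in>B \<inter> A. inner v2 w = 0"
    unfolding fset_def by blast
  have "x = \<bar>inner v2 v1\<bar>" using h(1) by (simp add: inner_commute)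
  moreover have "\<forall>w\<in>A \<inter> B. inner v1 w = 0" "\<forall>w\<in>A \<inter> B. inner v2 w = 0" using h(6,7) by (simp_all add: Int_commute)
  ultimately show "x \<in> fset A B" unfolding fset_def using h(2-5) by blast
qed

lemma fset_sym: "fset B A = fset A B"
  using fset_sub by blast

lemma fset_le1: "x \<in> fset A B \<Longrightarrow> 0 \<le> x \<and> x \<le> 1"
proof -
  assume "x \<in> fset A B"
  then obtain v1 v2 where h: "x = \<bar>inner v1 v2\<bar>" "v1 \<in> A" "v2 \<in> B" "norm v1 = 1" "norm v2 = 1"
    unfolding fset_def by blast
  have "\<bar>inner v1 v2\<bar> \<le> norm v1 * norm v2" by (rule Cauchy_Schwarz_ineq2)
  then show ?thesis using h by simp
qed


lemma fset_bdd: "bdd_above (fset A B)"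
  by (rule bdd_aboveI[of _ 1]) (use fset_le1 in blast)

lemma proj_bound:
  fixes A B :: "'b::{real_inner,complete_space} set"
  assumes A: "subspace A" "closed A" and B: "subspace B" "closed B"
    and ne: "fset A B \<noteq> {}" and v: "v \<in> B" "\<forall>w\<in>A \<inter> B. inner v w = 0"
  shows "norm (orth_proj A v) \<le> Sup (fset A B) * norm v"
proof -
  let ?u = "orth_proj A v"
  have S0: "0 \<le> Sup (fset A B)" using ne fset_le1 fset_bdd by (meson all_not_in_conv cSup_upper2)
  show ?thesis
  proof (cases "?u = 0 \<or> v = 0")
    case True
    then show ?thesis using S0 orth_proj_norm_le[OF A, of v] by auto
  next
    case False
    then have u0: "norm ?u > 0" and v0: "norm v > 0" by auto
    have uA: "?u \<in> A" by (rule orth_proj(1)[OF A])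
    have uperp: "\<forall>w\<in>A \<inter> B. inner ?u w = 0"
      using v(2) orth_proj_inner_S[OF A] by auto
    define u1 where "u1 = (1 / norm ?u) *\<^sub>R ?u"
    define v1 where "v1 = (1 / norm v) *\<^sub>R v"
    have "\<bar>inner u1 v1\<bar> \<in> fset A B"
      unfolding fset_def
    proof (intro CollectI exI conjI)
      show "u1 \<in> A" unfolding u1_def using A(1) uA by (simp add: subspace_scale)
      show "v1 \<in> B" unfolding v1_def using B(1) v(1) by (simp add: subspace_scale)
      show "norm u1 = 1" "norm v1 = 1" using u0 v0 unfolding u1_def v1_def by auto
      show "\<forall>w\<in>A \<inter> B. inner u1 w = 0" "\<forall>w\<in>A \<inter> B. inner v1 w = 0"
        using uperp v(2) unfolding u1_def v1_def by auto
    qed simp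
    then have le: "\<bar>inner u1 v1\<bar> \<le> Sup (fset A B)" using fset_bdd by (rule cSup_upper)
    have "inner u1 v1 = inner ?u v / (norm ?u * norm v)" unfolding u1_def v1_def by simp
    also have "inner ?u v = (norm ?u)^2" using orth_proj_sq[OF A, of v] by simp
    finally have "inner u1 v1 = norm ?u / norm v" using u0 v0 by (simp add: power2_eq_square)
    then have "norm ?u / norm v \<le> Sup (fset A B)" using le u0 v0 by simp
    then show ?thesis using v0 by (simp add: divide_le_eq)
  qed
qed




lemma pyth:
  fixes a b :: "'b::real_inner"
  assumes "inner a b = 0"
  shows "(norm (a + b))^2 = (norm a)^2 + (norm b)^2"
  using assms by (simp add: power2_norm_eq_inner inner_add_left inner_add_right inner_commute)

lemma ineqM:
  fixes a b :: "'b::real_inner"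
  shows "(\<bar>t\<bar> - 1)^2 * ((norm a)^2 + (norm b)^2) \<le> (norm (t *\<^sub>R a + b))^2 + (norm (a + t *\<^sub>R b))^2"
proof -
  have ex: "(norm (t *\<^sub>R a + b))^2 + (norm (a + t *\<^sub>R b))^2 = (t^2 + 1) * ((norm a)^2 + (norm b)^2) + 4*t*inner a b"
    by (simp only: power2_norm_eq_inner) (simp add: inner_add_left inner_add_right inner_commute algebra_simps power2_eq_square)
  have cs: "\<bar>inner a b\<bar> \<le> norm a * norm b" by (rule Cauchy_Schwarz_ineq2)
  have amgm: "2 * (norm a * norm b) \<le> (norm a)^2 + (norm b)^2"
    using sum_squares_bound[of "norm a" "norm b"] by (simp add: algebra_simps)
  have "\<bar>4*t*inner a b\<bar> \<le> 2*\<bar>t\<bar> * ((norm a)^2 + (norm b)^2)"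
  proof -
    have "\<bar>4*t*inner a b\<bar> = 4*\<bar>t\<bar>*\<bar>inner a b\<bar>" by (simp add: abs_mult)
    also have "\<dots> \<le> 4*\<bar>t\<bar>*(norm a * norm b)" using cs by (intro mult_left_mono) auto
    also have "\<dots> = 2*\<bar>t\<bar> * (2 * (norm a * norm b))" by simp
    also have "\<dots> \<le> 2*\<bar>t\<bar> * ((norm a)^2 + (norm b)^2)" using amgm
      by (intro mult_left_mono) auto
    finally show ?thesis .
  qed
  then have h1: "- (4*t*inner a b) \<le> 2*\<bar>t\<bar> * ((norm a)^2 + (norm b)^2)" by (simp only: abs_le_iff)
  have h2: "(\<bar>t\<bar> - 1)^2 = t^2 + 1 - 2*\<bar>t\<bar>" by (simp add: power2_eq_square algebra_simps abs_mult_self_eq)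
  have h3: "(\<bar>t\<bar> - 1)^2 * ((norm a)^2 + (norm b)^2) = (t^2 + 1) * ((norm a)^2 + (norm b)^2) - 2*\<bar>t\<bar> * ((norm a)^2 + (norm b)^2)"
    by (simp only: h2 left_diff_distrib)
  show ?thesis using ex h1 h3 by linarith
qed

lemma ineqW:
  fixes a b p q :: "'b::real_inner"
  assumes p: "norm p \<le> c * norm b" and q: "norm q \<le> c * norm a" and c: "0 \<le> c" "c < \<bar>t\<bar>"
  shows "((\<bar>t\<bar> - c)^2 / 2) * ((norm a)^2 + (norm b)^2) \<le> (norm (t *\<^sub>R a + p))^2 + (norm (q + t *\<^sub>R b))^2"
proof -
  have g: "(\<bar>t\<bar> - c)^2 * (norm y)^2 \<le> (norm (t *\<^sub>R y + r))^2" "((\<bar>t\<bar> - c)^2 / 2) * ((norm y)^2 + (norm z)^2) \<le> (\<bar>t\<bar> - c)^2 * (norm y)^2"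
    if "norm r \<le> c * norm z" "norm z \<le> norm y" for y z r :: 'b
  proof -
    have "norm (t *\<^sub>R y) - norm r \<le> norm (t *\<^sub>R y + r)" using norm_triangle_ineq[of "t *\<^sub>R y + r" "-r"] by simp
    moreover have "c * norm z \<le> c * norm y" using that c by (intro mult_left_mono) auto
    ultimately have "(\<bar>t\<bar> - c) * norm y \<le> norm (t *\<^sub>R y + r)" using that by (simp add: algebra_simps)
    moreover have "0 \<le> (\<bar>t\<bar> - c) * norm y" using c by simp
    ultimately have "((\<bar>t\<bar> - c) * norm y)^2 \<le> (norm (t *\<^sub>R y + r))^2" by (rule power_mono)
    then show "(\<bar>t\<bar> - c)^2 * (norm y)^2 \<le> (norm (t *\<^sub>R y + r))^2" by (simp add: power_mult_distrib)
    have "(norm z)^2 \<le> (norm y)^2" using that by (intro power_mono) auto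
    then have "(norm y)^2 + (norm z)^2 \<le> 2 * (norm y)^2" by simp
    then have "((\<bar>t\<bar> - c)^2 / 2) * ((norm y)^2 + (norm z)^2) \<le> ((\<bar>t\<bar> - c)^2 / 2) * (2 * (norm y)^2)"
      by (intro mult_left_mono) auto
    then show "((\<bar>t\<bar> - c)^2 / 2) * ((norm y)^2 + (norm z)^2) \<le> (\<bar>t\<bar> - c)^2 * (norm y)^2"
      by simp
  qed
  show ?thesis
  proof (cases "norm b \<le> norm a")
    case True
    have "((\<bar>t\<bar> - c)^2 / 2) * ((norm a)^2 + (norm b)^2) \<le> (norm (t *\<^sub>R a + p))^2"
      using g[OF p True] by linarith
    then show ?thesis using zero_le_power2[of "norm (q + t *\<^sub>R b)"] by linarith
  next
    case False
    then have F: "norm a \<le> norm b" by simp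
    have "((\<bar>t\<bar> - c)^2 / 2) * ((norm b)^2 + (norm a)^2) \<le> (norm (t *\<^sub>R b + q))^2"
      using g[OF q F] by linarith
    moreover have "norm (t *\<^sub>R b + q) = norm (q + t *\<^sub>R b)" by (simp add: add.commute)
    ultimately show ?thesis using zero_le_power2[of "norm (t *\<^sub>R a + p)"] by (simp only: add.commute[of "(norm b)^2"])
  qed
qed

lemma bij_lemma:
  fixes T :: "'b::{real_inner,complete_space} \<Rightarrow> 'b"
  assumes D: "subspace D" "closed D" and T: "bounded_linear T" "T ` D \<subseteq> D"
    and sa: "\<And>x y. x \<in> D \<Longrightarrow> y \<in> D \<Longrightarrow> inner (T x) y = inner x (T y)"
    and C: "C > 0" "\<And>x. x \<in> D \<Longrightarrow> norm x \<le> C * norm (T x)"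
  shows "bij_betw T D D"
proof -
  interpret bounded_linear T by (rule T(1))
  have lin: "linear T" by (rule linear_axioms)
  have inj: "inj_on T D"
  proof (rule inj_onI)
    fix x y assume xy: "x \<in> D" "y \<in> D" "T x = T y"
    then have "x - y \<in> D" using D(1) by (simp add: subspace_diff)
    moreover have "T (x - y) = 0" using xy by (simp add: diff)
    ultimately have "norm (x - y) \<le> 0" using C(2) by fastforce
    then show "x = y" by simp
  qed
  define R where "R = T ` D"
  have Rs: "subspace R" unfolding R_def by (rule linear_subspace_image[OF lin D(1)])
  have Rc: "closed R"
    unfolding closed_sequential_limits
  proof (intro allI impI)
    fix y l assume h: "(\<forall>n. y n \<in> R) \<and> y \<longlonglongrightarrow> l"
    have ex: "\<exists>x. x \<in> D \<and> T x = y n" for n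
    proof -
      have "y n \<in> T ` D" using h unfolding R_def by simp
      then show ?thesis by (rule imageE) auto
    qed
    obtain xs where xs0: "\<forall>n. xs n \<in> D \<and> T (xs n) = y n"
      using choice[of "\<lambda>n x. x \<in> D \<and> T x = y n"] ex by blast
    then have xs: "\<And>n. xs n \<in> D" "\<And>n. T (xs n) = y n" by auto
    have "convergent y" using h by (auto simp: convergent_def)
    then have cy: "Cauchy y" by (rule convergent_Cauchy)
    have "Cauchy xs"
    proof (rule metric_CauchyI)
      fix e :: real assume e: "e > 0"
      then obtain M where M: "\<And>m n. m \<ge> M \<Longrightarrow> n \<ge> M \<Longrightarrow> dist (y m) (y n) < e / C"
        using metric_CauchyD[OF cy, of "e / C"] C(1) by auto
      show "\<exists>M. \<forall>m\<ge>M. \<forall>n\<ge>M. dist (xs m) (xs n) < e"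
      proof (intro exI allI impI)
        fix m n assume "m \<ge> M" "n \<ge> M"
        then have d: "norm (y m - y n) < e / C" using M by (simp add: dist_norm)
        have "xs m - xs n \<in> D" using xs D(1) by (simp add: subspace_diff)
        then have "norm (xs m - xs n) \<le> C * norm (T (xs m - xs n))" by (rule C(2))
        also have "\<dots> = C * norm (y m - y n)" using xs by (simp add: diff)
        also have "\<dots> < C * (e / C)" using d C(1) by (intro mult_strict_left_mono) auto
        also have "\<dots> = e" using C(1) by simp
        finally show "dist (xs m) (xs n) < e" by (simp add: dist_norm)
      qed
    qed
    then obtain x where x: "xs \<longlonglongrightarrow> x" using Cauchy_convergent convergent_def by blast
    have xD: "x \<in> D" using closed_sequentially[OF D(2)] xs(1) x by blast
    have "(\<lambda>n. T (xs n)) \<longlonglongrightarrow> T x" by (rule tendsto[OF x])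
    then have "y \<longlonglongrightarrow> T x" using xs(2) by simp
    then have "l = T x" using h LIMSEQ_unique by blast
    then show "l \<in> R" unfolding R_def using xD by blast
  qed
  have "D \<subseteq> R"
  proof
    fix y assume yD: "y \<in> D"
    obtain r where r: "r \<in> R" "\<forall>w\<in>R. inner (y - r) w = 0" using proj_exists[OF Rs Rc, of y] by blast
    define z where "z = y - r"
    have zD: "z \<in> D" using yD r(1) T(2) D(1) unfolding z_def R_def by (auto simp: subspace_diff)
    have TzD: "T z \<in> D" using zD T(2) by blast
    have "T (T z) \<in> R" unfolding R_def using TzD by blast
    then have "inner z (T (T z)) = 0" using r(2) z_def by blast
    moreover have "inner (T z) (T z) = inner z (T (T z))"
      using sa[OF TzD zD] by (simp add: inner_commute)
    ultimately have "T z = 0" by simp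
    then have "norm z \<le> 0" using C(2)[OF zD] by simp
    then have "z = 0" by simp
    then show "y \<in> R" using r(1) z_def by simp
  qed
  then have "T ` D = D" using T(2) R_def by blast
  then show ?thesis using inj by (simp add: bij_betw_def)
qed




lemma Sigma_op_pair: "Sigma_op V1 V2 (a, b) = (orth_proj V1 (a + b), orth_proj V2 (a + b))"
  by (simp add: Sigma_op_def)

lemma norm_diff_scale_sq:
  fixes a b :: "'b::real_inner"
  shows "(norm (a - k *\<^sub>R b))^2 = (norm a)^2 - 2*k*inner a b + k^2 * (norm b)^2"
  by (simp only: power2_norm_eq_inner) (simp add: inner_diff_left inner_diff_right inner_commute power2_eq_square algebra_simps)

context
  fixes V1 V2 :: "'a::{real_inner, complete_space} set"
  assumes V: "subspace V1" "closed V1" "subspace V2" "closed V2"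
begin

lemma M_sub: "subspace (V1 \<inter> V2)" "closed (V1 \<inter> V2)"
  using V by (auto simp: subspace_inter closed_Int)

lemma perp1:
  assumes "\<forall>w\<in>V1 \<inter> V2. inner v w = 0"
  shows "\<forall>w\<in>V1 \<inter> V2. inner (orth_proj V1 v) w = 0"
  using assms orth_proj_inner_S[OF V(1,2)] by auto

lemma perp2:
  assumes "\<forall>w\<in>V1 \<inter> V2. inner v w = 0"
  shows "\<forall>w\<in>V1 \<inter> V2. inner (orth_proj V2 v) w = 0"
  using assms orth_proj_inner_S[OF V(3,4)] by auto

lemma decomp:
  assumes "v \<in> V1 \<or> v \<in> V2"
  shows "orth_proj (V1 \<inter> V2) v \<in> V1 \<inter> V2"
    "\<forall>w\<in>V1 \<inter> V2. inner (v - orth_proj (V1 \<inter> V2) v) w = 0"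
    "v \<in> V1 \<Longrightarrow> v - orth_proj (V1 \<inter> V2) v \<in> V1"
    "v \<in> V2 \<Longrightarrow> v - orth_proj (V1 \<inter> V2) v \<in> V2"
  using orth_proj[OF M_sub] V by (auto simp: subspace_diff)

lemma bound12:
  assumes ne: "fset V1 V2 \<noteq> {}" and "v \<in> V2" "\<forall>w\<in>V1 \<inter> V2. inner v w = 0"
  shows "norm (orth_proj V1 v) \<le> Sup (fset V1 V2) * norm v"
  by (rule proj_bound[OF V(1,2) V(3,4) ne assms(2,3)])

lemma bound21:
  assumes ne: "fset V1 V2 \<noteq> {}" and "v \<in> V1" "\<forall>w\<in>V1 \<inter> V2. inner v w = 0"
  shows "norm (orth_proj V2 v) \<le> Sup (fset V1 V2) * norm v"
proof -
  have "fset V2 V1 \<noteq> {}" using ne fset_sym by metis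
  moreover have "\<forall>w\<in>V2 \<inter> V1. inner v w = 0" using assms(3) by (simp add: Int_commute)
  ultimately have "norm (orth_proj V2 v) \<le> Sup (fset V2 V1) * norm v"
    using proj_bound[OF V(3,4) V(1,2)] assms(2) by blast
  then show ?thesis by (simp add: fset_sym)
qed

lemma Sup_nonneg: "fset V1 V2 \<noteq> {} \<Longrightarrow> 0 \<le> Sup (fset V1 V2)"
  using fset_le1 fset_bdd by (meson all_not_in_conv cSup_upper2)

lemma Sup_le1: "fset V1 V2 \<noteq> {} \<Longrightarrow> Sup (fset V1 V2) \<le> 1"
  using fset_le1 by (meson cSup_least)

lemma lowerb:
  assumes ne: "fset V1 V2 \<noteq> {}"
    and l: "l \<notin> {1 - Sup (fset V1 V2) .. 1 + Sup (fset V1 V2)}" "l \<noteq> 0" "l \<noteq> 2"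
  shows "\<exists>\<delta>>0. \<forall>x\<in>V1 \<times> V2. \<delta> * (norm x)^2 \<le> (norm (Sigma_op V1 V2 x - l *\<^sub>R x))^2"
proof -
  define c where "c = Sup (fset V1 V2)"
  define t where "t = 1 - l"
  have c0: "0 \<le> c" unfolding c_def by (rule Sup_nonneg[OF ne])
  have tc: "c < \<bar>t\<bar>" using l(1) unfolding t_def c_def by auto
  have t1: "\<bar>t\<bar> \<noteq> 1" using l(2,3) unfolding t_def by auto
  define \<delta> where "\<delta> = min ((\<bar>t\<bar> - 1)^2) ((\<bar>t\<bar> - c)^2/2)"
  have d0: "\<delta> > 0" unfolding \<delta>_def using t1 tc by auto
  show ?thesis
  proof (intro exI[of _ \<delta>] conjI ballI d0)
    fix x assume "x \<in> V1 \<times> V2"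
    then obtain v1 v2 where x: "x = (v1, v2)" and v: "v1 \<in> V1" "v2 \<in> V2" by auto
    let ?M = "V1 \<inter> V2"
    define m1 where "m1 = orth_proj ?M v1"
    define m2 where "m2 = orth_proj ?M v2"
    define w1 where "w1 = v1 - m1"
    define w2 where "w2 = v2 - m2"
    have m1: "m1 \<in> ?M" and w1p: "\<forall>w\<in>?M. inner w1 w = 0" and w1: "w1 \<in> V1"
      using decomp[of v1] v unfolding m1_def w1_def by auto
    have m2: "m2 \<in> ?M" and w2p: "\<forall>w\<in>?M. inner w2 w = 0" and w2: "w2 \<in> V2"
      using decomp[of v2] v unfolding m2_def w2_def by auto
    have v1e: "v1 = m1 + w1" and v2e: "v2 = m2 + w2" unfolding w1_def w2_def by auto
    have P1v1: "orth_proj V1 v1 = v1" using orth_proj_id[OF V(1,2) v(1)] .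
    have P2v2: "orth_proj V2 v2 = v2" using orth_proj_id[OF V(3,4) v(2)] .
    have P1v2: "orth_proj V1 v2 = m2 + orth_proj V1 w2"
      using orth_proj_add[OF V(1,2), of m2 w2] orth_proj_id[OF V(1,2), of m2] m2 v2e by auto
    have P2v1: "orth_proj V2 v1 = m1 + orth_proj V2 w1"
      using orth_proj_add[OF V(3,4), of m1 w1] orth_proj_id[OF V(3,4), of m1] m1 v1e by auto
    define A1 where "A1 = t *\<^sub>R m1 + m2"
    define B1 where "B1 = t *\<^sub>R w1 + orth_proj V1 w2"
    define A2 where "A2 = m1 + t *\<^sub>R m2"
    define B2 where "B2 = orth_proj V2 w1 + t *\<^sub>R w2"
    have c1: "orth_proj V1 (v1 + v2) - l *\<^sub>R v1 = A1 + B1"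
      unfolding A1_def B1_def t_def
      using orth_proj_add[OF V(1,2), of v1 v2] P1v1 P1v2 v1e by (simp add: algebra_simps)
    have c2: "orth_proj V2 (v1 + v2) - l *\<^sub>R v2 = A2 + B2"
      unfolding A2_def B2_def t_def
      using orth_proj_add[OF V(3,4), of v1 v2] P2v2 P2v1 v2e by (simp add: algebra_simps)
    have A1M: "A1 \<in> ?M" unfolding A1_def by (rule subspace_add[OF M_sub(1) subspace_scale[OF M_sub(1) m1] m2])
    have A2M: "A2 \<in> ?M" unfolding A2_def by (rule subspace_add[OF M_sub(1) m1 subspace_scale[OF M_sub(1) m2]])
    have P1w2p: "\<forall>w\<in>?M. inner (orth_proj V1 w2) w = 0" using perp1[OF w2p] .
    have P2w1p: "\<forall>w\<in>?M. inner (orth_proj V2 w1) w = 0" using perp2[OF w1p] .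
    have o1: "inner A1 B1 = 0" using A1M w1p P1w2p unfolding B1_def
      by (simp add: inner_add_right inner_commute)
    have o2: "inner A2 B2 = 0" using A2M w2p P2w1p unfolding B2_def
      by (simp add: inner_add_right inner_commute)
    have n1: "(norm v1)^2 = (norm m1)^2 + (norm w1)^2"
      using pyth[of m1 w1] w1p m1 v1e by (simp add: inner_commute)
    have n2: "(norm v2)^2 = (norm m2)^2 + (norm w2)^2"
      using pyth[of m2 w2] w2p m2 v2e by (simp add: inner_commute)
    have nx: "(norm x)^2 = (norm v1)^2 + (norm v2)^2" unfolding x by (simp add: norm_Pair)
    have nT: "(norm (Sigma_op V1 V2 x - l *\<^sub>R x))^2 = (norm A1)^2 + (norm B1)^2 + (norm A2)^2 + (norm B2)^2"
    proof -
      have "Sigma_op V1 V2 x - l *\<^sub>R x = (A1 + B1, A2 + B2)"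
        unfolding x Sigma_op_pair using c1 c2 by simp
      then have "(norm (Sigma_op V1 V2 x - l *\<^sub>R x))^2 = (norm (A1 + B1))^2 + (norm (A2 + B2))^2"
        by (simp add: norm_Pair)
      then show ?thesis using pyth[OF o1] pyth[OF o2] by simp
    qed
    have iM: "(\<bar>t\<bar> - 1)^2 * ((norm m1)^2 + (norm m2)^2) \<le> (norm A1)^2 + (norm A2)^2"
      unfolding A1_def A2_def by (rule ineqM)
    have b1: "norm (orth_proj V1 w2) \<le> c * norm w2" unfolding c_def by (rule bound12[OF ne w2 w2p])
    have b2: "norm (orth_proj V2 w1) \<le> c * norm w1" unfolding c_def by (rule bound21[OF ne w1 w1p])
    have iW: "((\<bar>t\<bar> - c)^2 / 2) * ((norm w1)^2 + (norm w2)^2) \<le> (norm B1)^2 + (norm B2)^2"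
      unfolding B1_def B2_def by (rule ineqW[OF b1 b2 c0 tc])
    have "\<delta> * ((norm m1)^2 + (norm m2)^2) \<le> (\<bar>t\<bar> - 1)^2 * ((norm m1)^2 + (norm m2)^2)"
      unfolding \<delta>_def by (intro mult_right_mono) auto
    moreover have "\<delta> * ((norm w1)^2 + (norm w2)^2) \<le> ((\<bar>t\<bar> - c)^2 / 2) * ((norm w1)^2 + (norm w2)^2)"
      unfolding \<delta>_def by (intro mult_right_mono) auto
    ultimately show "\<delta> * (norm x)^2 \<le> (norm (Sigma_op V1 V2 x - l *\<^sub>R x))^2"
      using iM iW nT nx n1 n2 by (simp add: algebra_simps)
  qed
qed

end




context
  fixes V1 V2 :: "'a::{real_inner, complete_space} set"
  assumes V: "subspace V1" "closed V1" "subspace V2" "closed V2"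
begin

lemma approx:
  assumes ne: "fset V1 V2 \<noteq> {}" and s: "s = 1 \<or> s = -1"
    and c: "0 < Sup (fset V1 V2)" and eta: "0 < \<eta>" "\<eta> \<le> Sup (fset V1 V2)"
  shows "\<exists>x\<in>V1 \<times> V2. Sup (fset V1 V2) \<le> norm x \<and>
     (norm (Sigma_op V1 V2 x - (1 + s * Sup (fset V1 V2)) *\<^sub>R x))^2 \<le> 4 * (Sup (fset V1 V2))^3 * \<eta>"
proof -
  define c where "c = Sup (fset V1 V2)"
  have c0: "0 < c" "0 < \<eta>" "\<eta> \<le> c" using c eta unfolding c_def by auto
  have "c - \<eta> < c" using eta by simp
  then obtain e where e: "e \<in> fset V1 V2" "c - \<eta> < e"
    using less_cSup_iff[OF ne fset_bdd] unfolding c_def by blast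
  then obtain v1 w where h: "e = \<bar>inner v1 w\<bar>" "v1 \<in> V1" "w \<in> V2" "norm v1 = 1" "norm w = 1"
    "\<forall>m\<in>V1 \<inter> V2. inner v1 m = 0" "\<forall>m\<in>V1 \<inter> V2. inner w m = 0"
    unfolding fset_def by blast
  define u where "u = orth_proj V1 w"
  have uV: "u \<in> V1" unfolding u_def by (rule orth_proj(1)[OF V(1,2)])
  have up: "\<forall>m\<in>V1 \<inter> V2. inner u m = 0" unfolding u_def by (rule perp1[OF V h(7)])
  have "inner u v1 = inner w v1" unfolding u_def by (rule orth_proj_inner_S[OF V(1,2) h(2)])
  then have "e = \<bar>inner u v1\<bar>" using h(1) by (simp add: inner_commute)
  also have "\<dots> \<le> norm u * norm v1" by (rule Cauchy_Schwarz_ineq2)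
  finally have ul: "c - \<eta> < norm u" using e(2) h(4) by simp
  have uu: "norm u \<le> c" using bound12[OF V ne h(3,7)] h(5) unfolding u_def c_def by simp
  have "norm (orth_proj V2 u) \<le> c * norm u" using bound21[OF V ne uV up] unfolding c_def .
  also have "\<dots> \<le> c * c" using uu c0 by (intro mult_left_mono) auto
  finally have Pu: "norm (orth_proj V2 u) \<le> c * c" .
  have "inner (orth_proj V2 u) w = inner u w" by (rule orth_proj_inner_S[OF V(3,4) h(3)])
  also have "\<dots> = (norm u)^2" unfolding u_def by (rule orth_proj_sq[OF V(1,2), symmetric])
  finally have ip: "inner (orth_proj V2 u) w = (norm u)^2" .
  define r where "r = orth_proj V2 u - (c^2) *\<^sub>R w"
  have rsq: "(norm r)^2 = (norm (orth_proj V2 u))^2 - 2*c^2*(norm u)^2 + (c^2)^2"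
    unfolding r_def using norm_diff_scale_sq[of "orth_proj V2 u" "c^2" w] ip h(5) by simp
  have q1: "(norm (orth_proj V2 u))^2 \<le> (c * c)^2" using Pu by (intro power_mono) auto
  have q2: "(c - \<eta>)^2 \<le> (norm u)^2" using ul c0 by (intro power_mono) auto
  have q3: "2*c^2*(c - \<eta>)^2 \<le> 2*c^2*(norm u)^2" using q2 by (intro mult_left_mono) auto
  have q4: "(c * c)^2 - 2*c^2*(c - \<eta>)^2 + (c^2)^2 = 4*c^3*\<eta> - 2*c^2*\<eta>^2" by algebra
  have q5: "0 \<le> 2*c^2*\<eta>^2" by simp
  have rb: "(norm r)^2 \<le> 4*c^3*\<eta>" using rsq q1 q3 q4 q5 by linarith
  define x where "x = (u, (s*c) *\<^sub>R w)"
  have xD: "x \<in> V1 \<times> V2" unfolding x_def using uV h(3) V(3) by (simp add: subspace_scale)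
  have "norm ((s*c) *\<^sub>R w) = c" using s c0 h(5) by auto
  then have nx: "c \<le> norm x" unfolding x_def using norm_snd_le[of "(s*c) *\<^sub>R w" u] by simp
  have k: "(1 + s*c)*(s*c) = s*c + c^2" using s by (auto simp: algebra_simps power2_eq_square)
  have T1: "orth_proj V1 (u + (s*c) *\<^sub>R w) - (1 + s*c) *\<^sub>R u = 0"
    using orth_proj_add[OF V(1,2), of u "(s*c) *\<^sub>R w"] orth_proj_scale[OF V(1,2), of "s*c" w]
      orth_proj_id[OF V(1,2) uV] unfolding u_def[symmetric] by (simp add: algebra_simps)
  have T2: "orth_proj V2 (u + (s*c) *\<^sub>R w) - (1 + s*c) *\<^sub>R ((s*c) *\<^sub>R w) = r"
  proof -
    have "orth_proj V2 (u + (s*c) *\<^sub>R w) = orth_proj V2 u + (s*c) *\<^sub>R w"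
      using orth_proj_add[OF V(3,4), of u "(s*c) *\<^sub>R w"] orth_proj_scale[OF V(3,4), of "s*c" w]
        orth_proj_id[OF V(3,4) h(3)] by simp
    moreover have "(1 + s*c) *\<^sub>R ((s*c) *\<^sub>R w) = (s*c) *\<^sub>R w + (c^2) *\<^sub>R w"
      using k by (simp add: scaleR_add_left[symmetric])
    ultimately show ?thesis unfolding r_def by simp
  qed
  have "Sigma_op V1 V2 x - (1 + s*c) *\<^sub>R x = (0, r)"
    unfolding x_def Sigma_op_pair using T1 T2 by simp
  then have "(norm (Sigma_op V1 V2 x - (1 + s*c) *\<^sub>R x))^2 = (norm r)^2" by (simp add: norm_Pair)
  then have fin: "(norm (Sigma_op V1 V2 x - (1 + s*c) *\<^sub>R x))^2 \<le> 4*c^3*\<eta>" using rb by simp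
  show ?thesis unfolding c_def[symmetric] using xD nx fin by blast
qed

lemma spec_point:
  assumes ne: "fset V1 V2 \<noteq> {}" and s: "s = 1 \<or> s = -1"
  shows "1 + s * Sup (fset V1 V2) \<in> op_spectrum (V1 \<times> V2) (Sigma_op V1 V2)"
proof -
  define c where "c = Sup (fset V1 V2)"
  define l where "l = 1 + s * c"
  have c0: "0 \<le> c" unfolding c_def by (rule Sup_nonneg[OF V ne])
  have "\<not> (\<exists>C. \<forall>x\<in>V1 \<times> V2. norm x \<le> C * norm (Sigma_op V1 V2 x - l *\<^sub>R x))"
  proof
    assume "\<exists>C. \<forall>x\<in>V1 \<times> V2. norm x \<le> C * norm (Sigma_op V1 V2 x - l *\<^sub>R x)"
    then obtain C where C: "\<And>x. x \<in> V1 \<times> V2 \<Longrightarrow> norm x \<le> C * norm (Sigma_op V1 V2 x - l *\<^sub>R x)" by blast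
    show False
    proof (cases "c = 0")
      case True
      then have l1: "l = 1" unfolding l_def by simp
      obtain e where "e \<in> fset V1 V2" using ne by blast
      then obtain v1 w where h: "v1 \<in> V1" "norm v1 = 1" "\<forall>m\<in>V1 \<inter> V2. inner v1 m = 0"
        unfolding fset_def by blast
      have "norm (orth_proj V2 v1) \<le> c * norm v1" using bound21[OF V ne h(1,3)] unfolding c_def .
      then have P0: "orth_proj V2 v1 = 0" using True by simp
      have xD: "(v1, 0) \<in> V1 \<times> V2" using h(1) V(3) by (simp add: subspace_0)
      have "Sigma_op V1 V2 (v1, 0) - l *\<^sub>R (v1, 0) = (0, 0)"
        unfolding Sigma_op_pair l1 using P0 orth_proj_id[OF V(1,2) h(1)] by (simp add: zero_prod_def)
      then have "norm (v1, 0) \<le> 0" using C[OF xD] by simp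
      then show False using h(2) by (simp add: norm_Pair)
    next
      case False
      then have cp: "0 < c" using c0 by simp
      define \<eta> where "\<eta> = min c (1 / (8 * c * (C^2 + 1)))"
      have Cp: "0 < C^2 + 1" using zero_le_power2[of C] by linarith
      have e0: "0 < \<eta>" "\<eta> \<le> c" unfolding \<eta>_def using cp Cp by auto
      obtain x where x: "x \<in> V1 \<times> V2" "c \<le> norm x"
        "(norm (Sigma_op V1 V2 x - l *\<^sub>R x))^2 \<le> 4 * c^3 * \<eta>"
        using approx[OF ne s cp[unfolded c_def] e0[unfolded c_def]] unfolding l_def c_def by blast
      define N where "N = norm (Sigma_op V1 V2 x - l *\<^sub>R x)"
      have "norm x \<le> C * N" using C[OF x(1)] unfolding N_def .
      then have "(norm x)^2 \<le> (C * N)^2" by (intro power_mono) auto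
      also have "\<dots> = C^2 * N^2" by (simp add: power_mult_distrib)
      also have "\<dots> \<le> C^2 * (4 * c^3 * \<eta>)" using x(3) unfolding N_def by (intro mult_left_mono) auto
      also have "4 * c^3 * \<eta> \<le> 4 * c^3 * (1 / (8 * c * (C^2 + 1)))"
        unfolding \<eta>_def using cp by (intro mult_left_mono) auto
      also have "\<dots> = c^2 / (2 * (C^2 + 1))"
      proof -
        have n1: "8 * c * (C^2 + 1) \<noteq> 0" "2 * (C^2 + 1) \<noteq> 0" using cp Cp by auto
        have "4 * c^3 * (1 / (8 * c * (C^2 + 1))) = (4 * c^3) / (8 * c * (C^2 + 1))" by simp
        also have "\<dots> = c^2 / (2 * (C^2 + 1))" using n1 cp
          by (simp add: divide_eq_eq eq_divide_eq power2_eq_square power3_eq_cube algebra_simps)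
        finally show ?thesis .
      qed
      finally have f1: "(norm x)^2 \<le> C^2 * (c^2 / (2 * (C^2 + 1)))" by (simp add: mult_left_mono)
      have "C^2 * (c^2 / (2 * (C^2 + 1))) = c^2 * (C^2 / (2 * (C^2 + 1)))" by simp
      also have "\<dots> < c^2 * 1"
      proof (intro mult_strict_left_mono)
        have "0 < 2 * (C^2 + 1)" using Cp by simp
        then show "C^2 / (2 * (C^2 + 1)) < 1" by (simp add: divide_less_eq)
      qed (use cp in simp)
      finally have "(norm x)^2 < c^2" using f1 by simp
      moreover have "c^2 \<le> (norm x)^2" using x(2) cp by (intro power_mono) auto
      ultimately show False by simp
    qed
  qed
  then show ?thesis unfolding op_spectrum_def l_def c_def by blast
qed

end




lemma sigma_inner:
  fixes V1 V2 :: "'a::{real_inner, complete_space} set"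
  assumes V: "subspace V1" "closed V1" "subspace V2" "closed V2"
    and ab: "a \<in> V1 \<times> V2" "b \<in> V1 \<times> V2"
  shows "inner (Sigma_op V1 V2 a) b = inner (fst a + snd a) (fst b + snd b)"
proof -
  obtain a1 a2 b1 b2 where e: "a = (a1, a2)" "b = (b1, b2)" by (cases a, cases b) auto
  have b: "b1 \<in> V1" "b2 \<in> V2" using ab e by auto
  have "inner (Sigma_op V1 V2 a) b = inner (orth_proj V1 (a1 + a2)) b1 + inner (orth_proj V2 (a1 + a2)) b2"
    unfolding e Sigma_op_pair by simp
  also have "\<dots> = inner (a1 + a2) b1 + inner (a1 + a2) b2"
    using orth_proj_inner_S[OF V(1,2) b(1)] orth_proj_inner_S[OF V(3,4) b(2)] by simp
  also have "\<dots> = inner (fst a + snd a) (fst b + snd b)" unfolding e by (simp add: inner_add_right)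
  finally show ?thesis .
qed

lemma sigma_bl:
  fixes V1 V2 :: "'a::{real_inner, complete_space} set"
  assumes V: "subspace V1" "closed V1" "subspace V2" "closed V2"
  shows "bounded_linear (Sigma_op V1 V2)"
proof -
  have eq: "Sigma_op V1 V2 = (\<lambda>x. (orth_proj V1 (fst x + snd x), orth_proj V2 (fst x + snd x)))"
    by (rule ext) (simp add: Sigma_op_def case_prod_beta)
  have s: "bounded_linear (\<lambda>x::'a \<times> 'a. fst x + snd x)"
    by (rule bounded_linear_add[OF bounded_linear_fst bounded_linear_snd])
  show ?thesis unfolding eq
    by (rule bounded_linear_Pair[OF bounded_linear_compose[OF orth_proj_bounded_linear[OF V(1,2)] s]
          bounded_linear_compose[OF orth_proj_bounded_linear[OF V(3,4)] s]])
qed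

theorem lemma3p12:
  fixes V1 V2 :: "'a::{real_inner, complete_space} set"
  assumes "subspace V1" "closed V1" "subspace V2" "closed V2"
    and "\<not> V1 \<subseteq> V2" "\<not> V2 \<subseteq> V1"
  shows "op_spectrum (dsum V1 V2) (Sigma_op V1 V2) \<subseteq>
           {1 - cos (friedrichs_angle V1 V2) .. 1 + cos (friedrichs_angle V1 V2)} \<union> {0, 2}
         \<and> 1 - cos (friedrichs_angle V1 V2) \<in> op_spectrum (dsum V1 V2) (Sigma_op V1 V2)
         \<and> 1 + cos (friedrichs_angle V1 V2) \<in> op_spectrum (dsum V1 V2) (Sigma_op V1 V2)"
proof -
  note V = assms(1-4)
  define c where "c = Sup (fset V1 V2)"
  have ne: "fset V1 V2 \<noteq> {}"
  proof -
    obtain a where a: "a \<in> V1" "a \<notin> V2" using assms(5) by blast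
    obtain b where b: "b \<in> V2" "b \<notin> V1" using assms(6) by blast
    define w1 where "w1 = a - orth_proj (V1 \<inter> V2) a"
    define w2 where "w2 = b - orth_proj (V1 \<inter> V2) b"
    have w1: "w1 \<in> V1" "\<forall>m\<in>V1 \<inter> V2. inner w1 m = 0" "orth_proj (V1 \<inter> V2) a \<in> V1 \<inter> V2"
      using decomp[OF V, of a] a unfolding w1_def by auto
    have w2: "w2 \<in> V2" "\<forall>m\<in>V1 \<inter> V2. inner w2 m = 0" "orth_proj (V1 \<inter> V2) b \<in> V1 \<inter> V2"
      using decomp[OF V, of b] b unfolding w2_def by auto
    have n1: "w1 \<noteq> 0" using w1(3) a(2) unfolding w1_def by auto
    have n2: "w2 \<noteq> 0" using w2(3) b(2) unfolding w2_def by auto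
    define u1 where "u1 = (1 / norm w1) *\<^sub>R w1"
    define u2 where "u2 = (1 / norm w2) *\<^sub>R w2"
    have "\<bar>inner u1 u2\<bar> \<in> fset V1 V2"
      unfolding fset_def
    proof (intro CollectI exI conjI)
      show "u1 \<in> V1" unfolding u1_def using V(1) w1(1) by (simp add: subspace_scale)
      show "u2 \<in> V2" unfolding u2_def using V(3) w2(1) by (simp add: subspace_scale)
      show "norm u1 = 1" "norm u2 = 1" using n1 n2 unfolding u1_def u2_def by auto
      show "\<forall>w\<in>V1 \<inter> V2. inner u1 w = 0" "\<forall>w\<in>V1 \<inter> V2. inner u2 w = 0"
        using w1(2) w2(2) unfolding u1_def u2_def by auto
    qed simp
    then show ?thesis by blast
  qed
  have c01: "0 \<le> c" "c \<le> 1" unfolding c_def using Sup_nonneg[OF V ne] Sup_le1[OF V ne] by auto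
  have cosc: "cos (friedrichs_angle V1 V2) = c" unfolding fangle c_def[symmetric] using c01 by simp
  define D where "D = V1 \<times> V2"
  have Dd: "dsum V1 V2 = D" unfolding dsum_def D_def ..
  have Ds: "subspace D" unfolding D_def by (rule subspace_Times[OF V(1) V(3)])
  have Dc: "closed D" unfolding D_def by (rule closed_Times[OF V(2) V(4)])
  have part1: "op_spectrum D (Sigma_op V1 V2) \<subseteq> {1 - c .. 1 + c} \<union> {0, 2}"
  proof
    fix l assume l: "l \<in> op_spectrum D (Sigma_op V1 V2)"
    show "l \<in> {1 - c .. 1 + c} \<union> {0, 2}"
    proof (rule ccontr)
      assume "l \<notin> {1 - c .. 1 + c} \<union> {0, 2}"
      then have l': "l \<notin> {1 - Sup (fset V1 V2) .. 1 + Sup (fset V1 V2)}" "l \<noteq> 0" "l \<noteq> 2"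
        unfolding c_def by auto
      obtain \<delta> where \<delta>: "\<delta> > 0" "\<forall>x\<in>V1 \<times> V2. \<delta> * (norm x)^2 \<le> (norm (Sigma_op V1 V2 x - l *\<^sub>R x))^2"
        using lowerb[OF V ne l'] by blast
      define T where "T = (\<lambda>x. Sigma_op V1 V2 x - l *\<^sub>R x)"
      define C where "C = 1 / sqrt \<delta>"
      have C0: "C > 0" unfolding C_def using \<delta>(1) by simp
      have Cb: "norm x \<le> C * norm (T x)" if "x \<in> D" for x
      proof -
        have "\<delta> * (norm x)^2 \<le> (norm (T x))^2" using \<delta>(2) that unfolding D_def T_def by blast
        then have "sqrt (\<delta> * (norm x)^2) \<le> sqrt ((norm (T x))^2)" by (rule real_sqrt_le_mono)
        then have "sqrt \<delta> * norm x \<le> norm (T x)" by (simp add: real_sqrt_mult)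
        then show ?thesis unfolding C_def using \<delta>(1) by (simp add: field_simps)
      qed
      have blT: "bounded_linear T" unfolding T_def
        by (rule bounded_linear_sub[OF sigma_bl[OF V] bounded_linear_scaleR_right])
      have TD: "T ` D \<subseteq> D"
      proof
        fix y assume "y \<in> T ` D"
        then obtain x where x: "x \<in> D" "y = T x" by blast
        have "Sigma_op V1 V2 x \<in> D" unfolding D_def Sigma_op_def
          using orth_proj(1)[OF V(1,2)] orth_proj(1)[OF V(3,4)] by (simp add: case_prod_beta)
        moreover have "l *\<^sub>R x \<in> D" using Ds x(1) by (simp add: subspace_scale)
        ultimately show "y \<in> D" unfolding x(2) T_def using Ds by (simp add: subspace_diff)
      qed
      have sa: "inner (T x) y = inner x (T y)" if "x \<in> D" "y \<in> D" for x y
      proof -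
        have "inner (T x) y = inner (fst x + snd x) (fst y + snd y) - l * inner x y"
          unfolding T_def using sigma_inner[OF V, of x y] that unfolding D_def by (simp add: inner_diff_left)
        moreover have "inner x (T y) = inner (fst y + snd y) (fst x + snd x) - l * inner y x"
          unfolding T_def using sigma_inner[OF V, of y x] that unfolding D_def
          by (simp add: inner_diff_right inner_commute)
        ultimately show ?thesis by (simp add: inner_commute)
      qed
      have "bij_betw T D D" by (rule bij_lemma[OF Ds Dc blT TD sa C0 Cb])
      then have "l \<notin> op_spectrum D (Sigma_op V1 V2)"
        unfolding op_spectrum_def using Cb unfolding T_def by blast
      then show False using l by simp
    qed
  qed
  have p2: "1 + (-1) * c \<in> op_spectrum D (Sigma_op V1 V2)"
    using spec_point[OF V ne, of "-1"] unfolding c_def D_def by simp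
  have p3: "1 + 1 * c \<in> op_spectrum D (Sigma_op V1 V2)"
    using spec_point[OF V ne, of "1"] unfolding c_def D_def by simp
  show ?thesis unfolding cosc Dd using part1 p2 p3 by simp
qed


end
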